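(* Let $\mu=(p,q,r,s)\in\mathbb{C}^4$. There is a constant $m(\mu)>0$ such that for every $\phi\in\Phi_\mu$, if three regions $X,Y,Z$ meet at a vertex which is a sink (all three arrows assigned by $\phi$ on the edges at that vertex point towards it), then $\min\{|\phi(X)|,|\phi(Y)|,|\phi(Z)|\}\le m(\mu)$.
   Context: Let $\Sigma$ be a countably infinite simplicial tree, properly embedded in the plane, all of whose vertices have degree $3$. A complementary region is the closure of a connected component of the complement of $\Sigma$; $\Omega$ is the set of complementary regions, $E(\Sigma)$ the set of edges. Every edge $e$ is the intersection of exactly two regions $X,Y$, and its two endpoints lie on two further regions $Z,W$ respectively; write $e\leftrightarrow(X,Y;Z,W)$. Three regions meet at each vertex. Fix a coloring $\mathcal C:\Omega\cup E(\Sigma)\to\{1,2,3\}$ such that for every $e\leftrightarrow(X,Y;Z,W)$, $\mathcal C(e)=\mathcal C(Z)=\mathcal C(W)$ and $\mathcal C(e),\mathcal C(X),\mathcal C(Y)$ are pairwise distinct; $\Omega_i$, $E_i$ denote regions/edges of color $i$. For $\mu=(p,q,r,s)\in\mathbb{C}^4$, a $\mu$-Markoff map is $\phi:\Omega\to\mathbb{C}$ such that (i) at every vertex with regions $X\in\Omega_1,Y\in\Omega_2,Z\in\Omega_3$, $x^2+y^2+z^2+xyz=px+qy+rz+s$ where $x=\phi(X)$, etc.; (ii) for $e\in E_1$, $e\leftrightarrow(Y,Z;X,X')$: $\phi(X)+\phi(X')=p-\phi(Y)\phi(Z)$; for $e\in E_2$, $e\leftrightarrow(X,Z;Y,Y')$: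 $\phi(Y)+\phi(Y')=q-\phi(X)\phi(Z)$; for $e\in E_3$, $e\leftrightarrow(X,Y;Z,Z')$: $\phi(Z)+\phi(Z')=r-\phi(X)\phi(Y)$. $\Phi_\mu$ is the set of such maps. Arrows: given $\phi$ and an edge $e\leftrightarrow(X,Y;Z,W)$, orient $e$ towards its endpoint lying on $W$ if $|\phi(Z)|>|\phi(W)|$, towards its endpoint lying on $Z$ if $|\phi(Z)|<|\phi(W)|$, and arbitrarily (but fixed) if equal. *)

theory Defs
  imports Complex_Main "HOL-Library.Countable_Set"
begin

text \<open>Vertices are the
elements of the type 'v; E is the (symmetric, irreflexive) adjacency relation;
R v is the set of the three complementary regions meeting at the vertex v;
col is the colouring of the regions by 1,2,3.  For an edge {u,v}, the two
regions containing the edge are R u \<inter> R v, and the regions on which the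
endpoints u resp. v lie (but not containing the edge) are the unique elements
of R u - R v resp. R v - R u.\<close>

definition trivalent_tree :: "('v \<Rightarrow> 'v \<Rightarrow> bool) \<Rightarrow> bool" where
  "trivalent_tree E \<longleftrightarrow>
     countable (UNIV :: 'v set) \<and> infinite (UNIV :: 'v set) \<and>
     (\<forall>u v. E u v \<longrightarrow> E v u) \<and> (\<forall>v. \<not> E v v) \<and>
     (\<forall>v. finite {u. E v u} \<and> card {u. E v u} = 3) \<and>
     (\<forall>u v. E\<^sup>*\<^sup>* u v) \<and>
     (\<forall>u v. E u v \<longrightarrow> \<not> (\<lambda>a b. E a b \<and> {a, b} \<noteq> {u, v})\<^sup>*\<^sup>* u v)"

definition region_structure :: "('v \<Rightarrow> 'v \<Rightarrow> bool) \<Rightarrow> ('v \<Rightarrow> 'r set) \<Rightarrow> ('r \<Rightarrow> nat) \<Rightarrow> bool" where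
  "region_structure E R col \<longleftrightarrow>
     (\<forall>v. finite (R v) \<and> card (R v) = 3) \<and>
     (\<forall>u v. E u v \<longrightarrow> card (R u \<inter> R v) = 2) \<and>
     (\<forall>v u1 u2. E v u1 \<and> E v u2 \<and> u1 \<noteq> u2 \<longrightarrow> R v \<inter> R u1 \<noteq> R v \<inter> R u2) \<and>
     (\<forall>v. col ` R v = {1, 2, 3})"

definition colour_param :: "complex \<Rightarrow> complex \<Rightarrow> complex \<Rightarrow> nat \<Rightarrow> complex" where
  "colour_param p q r c = (if c = 1 then p else if c = 2 then q else r)"

text \<open>The edge relation for an edge {u,v}
with side regions X,Y and end regions Z (at u), W (at v): the colour of Z (= colour
of W = colour of the edge) selects the parameter.\<close>
definition markoff_map ::
  "('v \<Rightarrow> 'v \<Rightarrow> bool) \<Rightarrow> ('v \<Rightarrow> 'r set) \<Rightarrow> ('r \<Rightarrow> nat) \<Rightarrow>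
   complex \<Rightarrow> complex \<Rightarrow> complex \<Rightarrow> complex \<Rightarrow> ('r \<Rightarrow> complex) \<Rightarrow> bool" where
  "markoff_map E R col p q r s \<phi> \<longleftrightarrow>
     (\<forall>v X Y Z. X \<in> R v \<and> Y \<in> R v \<and> Z \<in> R v \<and> col X = 1 \<and> col Y = 2 \<and> col Z = 3 \<longrightarrow>
        (\<phi> X)\<^sup>2 + (\<phi> Y)\<^sup>2 + (\<phi> Z)\<^sup>2 + \<phi> X * \<phi> Y * \<phi> Z
          = p * \<phi> X + q * \<phi> Y + r * \<phi> Z + s) \<and>
     (\<forall>u v X Y Z W. E u v \<and> R u \<inter> R v = {X, Y} \<and> Z \<in> R u - R v \<and> W \<in> R v - R u \<longrightarrow>
        \<phi> Z + \<phi> W = colour_param p q r (col Z) - \<phi> X * \<phi> Y)"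

text \<open>An arrow assignment: Ori u v means the edge {u,v} is oriented from u towards v.
Each edge gets exactly one orientation, which points towards the endpoint whose
end region has strictly smaller modulus (ties arbitrary).\<close>
definition arrows ::
  "('v \<Rightarrow> 'v \<Rightarrow> bool) \<Rightarrow> ('v \<Rightarrow> 'r set) \<Rightarrow> ('r \<Rightarrow> complex) \<Rightarrow> ('v \<Rightarrow> 'v \<Rightarrow> bool) \<Rightarrow> bool" where
  "arrows E R \<phi> Ori \<longleftrightarrow>
     (\<forall>u v. Ori u v \<longrightarrow> E u v) \<and>
     (\<forall>u v. E u v \<longrightarrow> (Ori u v \<longleftrightarrow> \<not> Ori v u)) \<and>
     (\<forall>u v Z W. E u v \<and> Z \<in> R u - R v \<and> W \<in> R v - R u \<longrightarrow>
        (norm (\<phi> Z) > norm (\<phi> W) \<longrightarrow> Ori u v) \<and> (norm (\<phi> Z) < norm (\<phi> W) \<longrightarrow> Ori v u))"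

definition sink :: "('v \<Rightarrow> 'v \<Rightarrow> bool) \<Rightarrow> ('v \<Rightarrow> 'v \<Rightarrow> bool) \<Rightarrow> 'v \<Rightarrow> bool" where
  "sink E Ori v \<longleftrightarrow> (\<forall>u. E u v \<longrightarrow> Ori u v)"

end

theory Submission imports Defs begin
lemma real_core1:
  fixes t u w K :: real
  assumes K: "K \<ge> 1" and tu: "t \<ge> u" and tw: "t \<ge> w" and uw: "u \<ge> w"
    and wM: "w > 7 + 13*K"
    and h1: "t^2 \<le> u^2 + w^2 + K*u + K*w + K"
    and h2: "t*u*w \<le> t^2 + u^2 + w^2 + K*t + K*u + K*w + K"
  shows False
proof -
  have u1: "u \<ge> 1" using wM uw K by linarith
  have t1: "t \<ge> 1" using u1 tu by linarith
  have w0: "w \<ge> 0" using wM K by linarith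
  have uu: "u \<le> u^2" using u1 by (simp add: power2_eq_square)
  have uu1: "1 \<le> u^2" using u1 by (simp add: one_le_power)
  have a1: "K*u \<le> K*u^2" using uu K by (intro mult_left_mono) auto
  have a2: "K \<le> K*u^2" using uu1 K mult_left_mono[of 1 "u^2" K] by simp
  have a3: "w^2 \<le> u^2" using uw w0 by (intro power_mono) auto
  have a4: "K*w \<le> K*u" using uw K by simp
  define c where "c = 2+3*K"
  have c1: "1 \<le> c" using K c_def by linarith
  have "t^2 \<le> u^2 + w^2 + K*u + K*w + K" using h1 .
  also have "\<dots> \<le> 2*u^2 + 3*(K*u^2)" using a1 a2 a3 a4 by linarith
  also have "\<dots> = c*u^2" unfolding c_def by (simp add: algebra_simps)
  also have "\<dots> \<le> (c*c) * u^2" using mult_right_mono[OF mult_left_mono[OF c1, of c] zero_le_power2[of u]] c1 by simp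
  also have "\<dots> = (c*u)^2" by (simp add: power2_eq_square)
  finally have "t^2 \<le> (c*u)^2" .
  moreover have "0 \<le> c*u" using u1 c1 by simp
  ultimately have tb: "t \<le> c*u" by (rule power2_le_imp_le)
  have b1: "u^2 \<le> t^2" using tu u1 by (intro power_mono) auto
  have b2: "w^2 \<le> t^2" using tw w0 by (intro power_mono) auto
  have b3: "K \<le> K*t" using t1 K mult_left_mono[of 1 t K] by simp
  have b4: "K*u \<le> K*t" using tu K by simp
  have "t*(u*w) \<le> t^2 + u^2 + w^2 + K*t + K*u + K*w + K" using h2 by (simp add: mult.assoc)
  also have "\<dots> \<le> 3*t^2 + 4*(K*t)" using b1 b2 b3 b4 a4 by linarith
  also have "\<dots> = t*(3*t + 4*K)" by (simp add: algebra_simps power2_eq_square)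
  finally have "t*(u*w) \<le> t*(3*t + 4*K)" .
  hence cc: "u*w \<le> 3*t + 4*K" using t1 by simp
  have d1: "4*K \<le> 4*K*u" using u1 K mult_left_mono[of 1 u "4*K"] by simp
  have d2: "3*t \<le> 3*(c*u)" using tb by simp
  have "u*w \<le> 3*(c*u) + 4*K*u" using cc d1 d2 by linarith
  also have "\<dots> = u*(6+13*K)" unfolding c_def by (simp add: algebra_simps)
  finally have "u*w \<le> u*(6+13*K)" .
  hence "w \<le> 6 + 13*K" using u1 by simp
  thus False using wM by simp
qed

lemma ring_aux:
  fixes a b c w PA PB PC s :: complex
  assumes "w = PA - b*c - a" "a^2+b^2+c^2+a*b*c = PA*a+PB*b+PC*c+s"
  shows "a*w = b^2+c^2-PB*b-PC*c-s"
proof -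
  have "a*w = PA*a - a*b*c - a^2" unfolding assms(1) by (simp add: algebra_simps power2_eq_square)
  also have "\<dots> = b^2+c^2-PB*b-PC*c-s" using assms(2) by (simp add: algebra_simps eq_diff_eq)
  finally show ?thesis .
qed

lemma distinct3:
  assumes "card {A,B,C::'a} = 3" shows "A \<noteq> B" "A \<noteq> C" "B \<noteq> C"
  using assms by (auto simp: card_insert_if split: if_splits)

lemma rs_card: "region_structure E R col \<Longrightarrow> finite (R v) \<and> card (R v) = 3"
  unfolding region_structure_def by (elim conjE) (erule allE, assumption)
lemma rs_int: "region_structure E R col \<Longrightarrow> E u v \<Longrightarrow> card (R u \<inter> R v) = 2"
  unfolding region_structure_def by (elim conjE) (erule allE, erule allE, erule mp, assumption)
lemma rs_inj: "region_structure E R col \<Longrightarrow> E v u1 \<Longrightarrow> E v u2 \<Longrightarrow> u1 \<noteq> u2 \<Longrightarrow> R v \<inter> R u1 \<noteq> R v \<inter> R u2"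
  unfolding region_structure_def by (elim conjE) (erule allE, erule allE, erule allE, erule mp, simp)
lemma rs_col: "region_structure E R col \<Longrightarrow> col ` R v = {1,2,3}"
  unfolding region_structure_def by (elim conjE) (erule allE, assumption)
lemma mm_vertex:
  assumes "markoff_map E R col p q r s \<phi>" "X \<in> R v" "Y \<in> R v" "Z \<in> R v" "col X = 1" "col Y = 2" "col Z = 3"
  shows "(\<phi> X)\<^sup>2 + (\<phi> Y)\<^sup>2 + (\<phi> Z)\<^sup>2 + \<phi> X * \<phi> Y * \<phi> Z
          = p * \<phi> X + q * \<phi> Y + r * \<phi> Z + s"
proof -
  have "\<forall>v X Y Z. X \<in> R v \<and> Y \<in> R v \<and> Z \<in> R v \<and> col X = 1 \<and> col Y = 2 \<and> col Z = 3 \<longrightarrow>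
        (\<phi> X)\<^sup>2 + (\<phi> Y)\<^sup>2 + (\<phi> Z)\<^sup>2 + \<phi> X * \<phi> Y * \<phi> Z
          = p * \<phi> X + q * \<phi> Y + r * \<phi> Z + s"
    using assms(1) unfolding markoff_map_def by (rule conjunct1)
  thus ?thesis using assms(2-7) by blast
qed
lemma tt_sym: "trivalent_tree E \<Longrightarrow> E u v \<Longrightarrow> E v u"
  unfolding trivalent_tree_def by (elim conjE) (erule allE, erule allE, erule mp, assumption)
lemma tt_nb: "trivalent_tree E \<Longrightarrow> finite {u. E v u} \<and> card {u. E v u} = 3"
  unfolding trivalent_tree_def by (elim conjE) (erule allE, assumption)
lemma vertex_sym:
  assumes mm: "markoff_map E R col p q r s \<phi>" and rs: "region_structure E R col"
    and Rv: "R v = {A,B,C}"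
  shows "(\<phi> A)^2 + (\<phi> B)^2 + (\<phi> C)^2 + \<phi> A * \<phi> B * \<phi> C
    = colour_param p q r (col A) * \<phi> A + colour_param p q r (col B) * \<phi> B
      + colour_param p q r (col C) * \<phi> C + s"
proof -
  have "card {A,B,C} = 3" using rs_card[OF rs, of v] Rv by simp
  note d = distinct3[OF this]
  have im: "col ` {A,B,C} = {1,2,3}" using rs_col[OF rs, of v] Rv by simp
  obtain X1 where X1: "X1 \<in> {A,B,C}" "col X1 = 1" using im by (metis imageE insertI1)
  obtain X2 where X2: "X2 \<in> {A,B,C}" "col X2 = 2" using im by (metis imageE insertI1 insertI2)
  obtain X3 where X3: "X3 \<in> {A,B,C}" "col X3 = 3" using im
    by (metis imageE insertI1 insertI2 singletonI insert_commute)
  have V: "(\<phi> X1)\<^sup>2 + (\<phi> X2)\<^sup>2 + (\<phi> X3)\<^sup>2 + \<phi> X1 * \<phi> X2 * \<phi> X3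
          = p * \<phi> X1 + q * \<phi> X2 + r * \<phi> X3 + s"
    using mm_vertex[OF mm _ _ _ X1(2) X2(2) X3(2), of v] X1(1) X2(1) X3(1) Rv by blast
  show ?thesis using X1 X2 X3 V d
    by (auto simp: colour_param_def algebra_simps)
qed

lemma mm_edge:
  assumes "markoff_map E R col p q r s \<phi>" "E u v" "R u \<inter> R v = {X, Y}" "Z \<in> R u - R v" "W \<in> R v - R u"
  shows "\<phi> Z + \<phi> W = colour_param p q r (col Z) - \<phi> X * \<phi> Y"
proof -
  have "\<forall>u v X Y Z W. E u v \<and> R u \<inter> R v = {X, Y} \<and> Z \<in> R u - R v \<and> W \<in> R v - R u \<longrightarrow>
        \<phi> Z + \<phi> W = colour_param p q r (col Z) - \<phi> X * \<phi> Y"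
    using assms(1) unfolding markoff_map_def by (rule conjunct2)
  from this[rule_format, of u v X Y Z W] assms(2-5) show ?thesis by blast
qed
lemma arr_gt:
  assumes "arrows E R \<phi> Ori" "E u v" "Z \<in> R u - R v" "W \<in> R v - R u" "norm (\<phi> Z) > norm (\<phi> W)"
  shows "Ori u v"
proof -
  have "\<forall>u v Z W. E u v \<and> Z \<in> R u - R v \<and> W \<in> R v - R u \<longrightarrow>
        (norm (\<phi> Z) > norm (\<phi> W) \<longrightarrow> Ori u v) \<and> (norm (\<phi> Z) < norm (\<phi> W) \<longrightarrow> Ori v u)"
    using assms(1) unfolding arrows_def by (elim conjE) assumption
  from this[rule_format, of u v Z W] assms(2-5) show ?thesis by blast
qed
lemma arr_anti: "arrows E R \<phi> Ori \<Longrightarrow> E u v \<Longrightarrow> Ori u v \<Longrightarrow> \<not> Ori v u"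
  unfolding arrows_def by (elim conjE) (erule allE, erule allE, erule impE, assumption, simp)

lemma opp:
  assumes tt: "trivalent_tree E" and rs: "region_structure E R col"
    and mm: "markoff_map E R col p q r s \<phi>" and arr: "arrows E R \<phi> Ori"
    and sk: "sink E Ori v" and Rv: "R v = {A,B,C}"
  shows "norm (\<phi> A)^2 \<le> norm ((\<phi> B)^2 + (\<phi> C)^2 - colour_param p q r (col B) * \<phi> B
      - colour_param p q r (col C) * \<phi> C - s)"
proof -
  have c3: "card {A,B,C} = 3" using rs_card[OF rs, of v] Rv by simp
  note d = distinct3[OF c3]
  define N where "N = {u. E v u}"
  have fN: "finite N" and cN: "card N = 3" using tt_nb[OF tt, of v] unfolding N_def by auto
  define f where "f u = R v \<inter> R u" for u
  have inj: "inj_on f N" unfolding inj_on_def f_def N_def using rs_inj[OF rs] by blast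
  define T where "T = {S. S \<subseteq> R v \<and> card S = 2}"
  have sub: "f ` N \<subseteq> T"
  proof
    fix S assume "S \<in> f ` N"
    then obtain u where "E v u" "S = R v \<inter> R u" unfolding N_def f_def by blast
    thus "S \<in> T" unfolding T_def using rs_int[OF rs, of v u] by blast
  qed
  have fRv: "finite (R v)" using Rv by simp
  have cT: "card T = 3" unfolding T_def using n_subsets[OF fRv, of 2] Rv c3 by (simp add: numeral_3_eq_3 numeral_2_eq_2)
  have fT: "finite T" unfolding T_def using fRv by simp
  have "card (f ` N) = 3" using card_image[OF inj] cN by simp
  hence eq: "f ` N = T" using card_subset_eq[OF fT sub] cT by simp
  have "{B,C} \<in> T" unfolding T_def using Rv d by auto
  then obtain u where u: "E v u" "R v \<inter> R u = {B,C}" using eq unfolding N_def f_def by auto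
  have Anu: "A \<notin> R u" using u(2) d Rv by blast
  have cu: "card (R u) = 3" "finite (R u)" using rs_card[OF rs, of u] by auto
  have "\<not> R u \<subseteq> R v"
  proof
    assume "R u \<subseteq> R v"
    hence "R u = R v \<inter> R u" by blast
    hence "R u = {B,C}" using u(2) by simp
    moreover have "card {B,C} = 2" using d by simp
    ultimately show False using cu by simp
  qed
  then obtain W where W: "W \<in> R u" "W \<notin> R v" by blast
  have ARv: "A \<in> R v" using Rv by simp
  have hw: "\<phi> A + \<phi> W = colour_param p q r (col A) - \<phi> B * \<phi> C"
    using mm_edge[OF mm u(1), of B C A W] u(2) W ARv Anu by blast
  have euv: "E u v" using tt_sym[OF tt u(1)] .
  have "Ori u v" using sk euv unfolding sink_def by blast
  hence "\<not> Ori v u" using arr_anti[OF arr euv] by blast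
  hence le: "norm (\<phi> A) \<le> norm (\<phi> W)"
    using arr_gt[OF arr u(1), of A W] W ARv Anu by force
  have V: "(\<phi> A)^2 + (\<phi> B)^2 + (\<phi> C)^2 + \<phi> A * \<phi> B * \<phi> C
    = colour_param p q r (col A) * \<phi> A + colour_param p q r (col B) * \<phi> B
      + colour_param p q r (col C) * \<phi> C + s" using vertex_sym[OF mm rs Rv] .
  have hw2: "\<phi> W = colour_param p q r (col A) - \<phi> B * \<phi> C - \<phi> A" using hw by (simp add: algebra_simps)
  have "\<phi> A * \<phi> W = (\<phi> B)^2 + (\<phi> C)^2 - colour_param p q r (col B) * \<phi> B
      - colour_param p q r (col C) * \<phi> C - s"
    using ring_aux[OF hw2 V] .
  moreover have "norm (\<phi> A)^2 \<le> norm (\<phi> A * \<phi> W)"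
    using le by (simp add: norm_mult power2_eq_square mult_left_mono)
  ultimately show ?thesis by simp
qed

lemma norm5: "norm ((x1::complex)+x2-x3-x4-x5) \<le> norm x1+norm x2+norm x3+norm x4+norm x5"
proof -
  have "norm (x1+x2-x3-x4-x5) \<le> norm (x1+x2-x3-x4) + norm x5" by (rule norm_triangle_ineq4)
  moreover have "norm (x1+x2-x3-x4) \<le> norm (x1+x2-x3) + norm x4" by (rule norm_triangle_ineq4)
  moreover have "norm (x1+x2-x3) \<le> norm (x1+x2) + norm x3" by (rule norm_triangle_ineq4)
  moreover have "norm (x1+x2) \<le> norm x1 + norm x2" by (rule norm_triangle_ineq)
  ultimately show ?thesis by linarith
qed

lemma cp_bound: "norm (colour_param p q r c) \<le> norm p + norm q + norm r + norm s + 1"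
proof -
  have h: "0 \<le> norm p" "0\<le>norm q" "0\<le>norm r" "0\<le>norm s" by simp_all
  show ?thesis unfolding colour_param_def using h by (cases "c=1"; cases "c=2"; simp)
qed

lemma prodbound:
  assumes "norm P \<le> K" shows "norm (P * (x::complex)) \<le> K * norm x"
  using assms by (simp add: norm_mult mult_right_mono)

lemma core:
  assumes tt: "trivalent_tree E" and rs: "region_structure E R col"
    and mm: "markoff_map E R col p q r s \<phi>" and arr: "arrows E R \<phi> Ori"
    and sk: "sink E Ori v" and Rv: "R v = {A,B,C}"
    and Kdef: "K = norm p + norm q + norm r + norm s + 1"
    and tu: "norm (\<phi> B) \<le> norm (\<phi> A)" and tw: "norm (\<phi> C) \<le> norm (\<phi> A)"
  shows "norm (\<phi> B) \<le> 7 + 13*K \<or> norm (\<phi> C) \<le> 7 + 13*K"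
proof (rule ccontr)
  assume nc: "\<not> ?thesis"
  define a where "a = \<phi> A"
  define b where "b = \<phi> B"
  define c where "c = \<phi> C"
  define PA where "PA = colour_param p q r (col A)"
  define PB where "PB = colour_param p q r (col B)"
  define PC where "PC = colour_param p q r (col C)"
  have K1: "K \<ge> 1" using Kdef by simp
  have bA: "norm PA \<le> K" "norm PB \<le> K" "norm PC \<le> K" "norm s \<le> K"
    using cp_bound[of p q r _ s] Kdef unfolding PA_def PB_def PC_def by auto
  have O: "norm a ^2 \<le> norm (b^2 + c^2 - PB*b - PC*c - s)"
    using opp[OF tt rs mm arr sk Rv] unfolding a_def b_def c_def PB_def PC_def .
  also have "\<dots> \<le> norm (b^2) + norm (c^2) + norm (PB*b) + norm (PC*c) + norm s" by (rule norm5)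
  also have "\<dots> \<le> norm b^2 + norm c^2 + K*norm b + K*norm c + K"
    using prodbound[OF bA(2), of b] prodbound[OF bA(3), of c] bA(4) by (simp add: norm_power)
  finally have h1: "norm a ^2 \<le> norm b^2 + norm c^2 + K*norm b + K*norm c + K" .
  have V: "a^2 + b^2 + c^2 + a*b*c = PA*a + PB*b + PC*c + s"
    using vertex_sym[OF mm rs Rv] unfolding a_def b_def c_def PA_def PB_def PC_def .
  have abc: "a*b*c = PA*a + PB*b + PC*c + s - a^2 - b^2 - c^2" using V by (simp add: algebra_simps eq_diff_eq)
  have "norm a * norm b * norm c = norm (a*b*c)" by (simp add: norm_mult)
  also have "\<dots> = norm (PA*a + PB*b + PC*c + s - a^2 - b^2 - c^2)" by (subst abc) (rule refl)
  also have "\<dots> \<le> norm (PA*a) + norm (PB*b) + norm (PC*c) + norm s + norm (a^2) + norm (b^2) + norm (c^2)"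
  proof -
    have "norm (PA*a + PB*b + PC*c + s - a^2 - b^2 - c^2) \<le> norm (PA*a + PB*b + PC*c + s - a^2 - b^2) + norm (c^2)" by (rule norm_triangle_ineq4)
    moreover have "norm (PA*a + PB*b + PC*c + s - a^2 - b^2) \<le> norm (PA*a + PB*b + PC*c + s - a^2) + norm (b^2)" by (rule norm_triangle_ineq4)
    moreover have "norm (PA*a + PB*b + PC*c + s - a^2) \<le> norm (PA*a + PB*b + PC*c + s) + norm (a^2)" by (rule norm_triangle_ineq4)
    moreover have "norm (PA*a + PB*b + PC*c + s) \<le> norm (PA*a + PB*b + PC*c) + norm s" by (rule norm_triangle_ineq)
    moreover have "norm (PA*a + PB*b + PC*c) \<le> norm (PA*a + PB*b) + norm (PC*c)" by (rule norm_triangle_ineq)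
    moreover have "norm (PA*a + PB*b) \<le> norm (PA*a) + norm (PB*b)" by (rule norm_triangle_ineq)
    ultimately show ?thesis by linarith
  qed
  also have "\<dots> \<le> norm a^2 + norm b^2 + norm c^2 + K*norm a + K*norm b + K*norm c + K"
    using prodbound[OF bA(1), of a] prodbound[OF bA(2), of b] prodbound[OF bA(3), of c] bA(4)
    by (simp add: norm_power)
  finally have h2: "norm a * norm b * norm c \<le> norm a^2 + norm b^2 + norm c^2 + K*norm a + K*norm b + K*norm c + K" .
  have tu': "norm b \<le> norm a" "norm c \<le> norm a" using tu tw unfolding a_def b_def c_def by auto
  have nc': "norm b > 7 + 13*K" "norm c > 7 + 13*K" using nc unfolding b_def c_def by auto
  show False
  proof (cases "norm c \<le> norm b")
    case True
    show False by (rule real_core1[OF K1 tu'(1) tu'(2) True nc'(2) h1 h2])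
  next
    case False
    hence cb: "norm b \<le> norm c" by simp
    have h1': "norm a ^2 \<le> norm c^2 + norm b^2 + K*norm c + K*norm b + K" using h1 by linarith
    have "norm a * norm c * norm b = norm a * norm b * norm c" by (simp add: mult_ac)
    hence h2': "norm a * norm c * norm b \<le> norm a^2 + norm c^2 + norm b^2 + K*norm a + K*norm c + K*norm b + K" using h2 by linarith
    show False by (rule real_core1[OF K1 tu'(2) tu'(1) cb nc'(1) h1' h2'])
  qed
qed

theorem lemma3p5:
  fixes E :: "'v \<Rightarrow> 'v \<Rightarrow> bool" and R :: "'v \<Rightarrow> 'r set" and col :: "'r \<Rightarrow> nat"
    and p q r s :: complex
  assumes "trivalent_tree E" and "region_structure E R col"
  shows "\<exists>m>0. \<forall>\<phi> Ori v X Y Z.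
           markoff_map E R col p q r s \<phi> \<and> arrows E R \<phi> Ori \<and> sink E Ori v \<and> R v = {X, Y, Z}
           \<longrightarrow> Min {norm (\<phi> X), norm (\<phi> Y), norm (\<phi> Z)} \<le> m"
proof -
  define K where "K = norm p + norm q + norm r + norm s + 1"
  have K1: "K \<ge> 1" unfolding K_def by simp
  have "\<forall>\<phi> Ori v X Y Z.
           markoff_map E R col p q r s \<phi> \<and> arrows E R \<phi> Ori \<and> sink E Ori v \<and> R v = {X, Y, Z}
           \<longrightarrow> Min {norm (\<phi> X), norm (\<phi> Y), norm (\<phi> Z)} \<le> 7 + 13*K"
  proof (intro allI impI)
    fix \<phi> Ori v X Y Z
    assume H: "markoff_map E R col p q r s \<phi> \<and> arrows E R \<phi> Ori \<and> sink E Ori v \<and> R v = {X, Y, Z}"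
    hence mm: "markoff_map E R col p q r s \<phi>" and arr: "arrows E R \<phi> Ori"
      and sk: "sink E Ori v" and Rv: "R v = {X, Y, Z}" by auto
    note cr = core[OF assms mm arr sk _ K_def]
    let ?S = "{norm (\<phi> X), norm (\<phi> Y), norm (\<phi> Z)}"
    have fin: "finite ?S" by simp
    have ex: "\<exists>x\<in>?S. x \<le> 7 + 13*K"
    proof -
      have "norm (\<phi> Y) \<le> norm (\<phi> X) \<and> norm (\<phi> Z) \<le> norm (\<phi> X) \<or>
            norm (\<phi> X) \<le> norm (\<phi> Y) \<and> norm (\<phi> Z) \<le> norm (\<phi> Y) \<or>
            norm (\<phi> X) \<le> norm (\<phi> Z) \<and> norm (\<phi> Y) \<le> norm (\<phi> Z)" by linarith
      moreover have "R v = {Y, X, Z}" "R v = {Z, X, Y}" using Rv by (auto simp: insert_commute)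
      ultimately consider (a) "norm (\<phi> Y) \<le> norm (\<phi> X)" "norm (\<phi> Z) \<le> norm (\<phi> X)"
        | (b) "norm (\<phi> X) \<le> norm (\<phi> Y)" "norm (\<phi> Z) \<le> norm (\<phi> Y)" "R v = {Y, X, Z}"
        | (c) "norm (\<phi> X) \<le> norm (\<phi> Z)" "norm (\<phi> Y) \<le> norm (\<phi> Z)" "R v = {Z, X, Y}"
        by blast
      thus ?thesis
      proof cases
        case a
        from cr[OF Rv a] show ?thesis by blast
      next
        case b
        from cr[OF b(3) b(1) b(2)] show ?thesis by blast
      next
        case c
        from cr[OF c(3) c(1) c(2)] show ?thesis by blast
      qed
    qed
    then obtain x where "x \<in> ?S" "x \<le> 7 + 13*K" by blast
    thus "Min ?S \<le> 7 + 13*K" using Min_le[OF fin] by (meson order_trans)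
  qed
  moreover have "(7 + 13*K :: real) > 0" using K1 by simp
  ultimately show ?thesis by blast
qed
end
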